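(* Let $\alpha,\beta\in(0,1)$ and $\alpha_0:=\alpha+\beta-\alpha\beta$. Let $Z_i=(X_i,Y_i)$, $i=1,\dots,n+1$, be i.i.d., let $D_n=(Z_i)_{i\le n}$, $D_{n+1}=(Z_i)_{i\le n+1}$, and let the training mechanism $M_{\mathrm{train}}$ be permutation invariant. For a dataset $D$ of size $m$, DP-SCP outputs $\theta=M_{\mathrm{train}}(D)$ and $\hat q$ = output of Algorithm 2 applied to the scores $\{s(Z;\theta):Z\in D\}$ with $r=\lceil(1-\alpha)(n+1)\rceil$, buffer $m_n\ge0$ with $r+m_n\le m$, failure probability $\beta$, and range upper end $b$ exceeding all scores. (i) When DP-SCP is run on $D_{n+1}$, producing $(\theta_{n+1},\hat q)$, one has $\mathbb P\big(s(Z_{n+1};\theta_{n+1})\le\hat q\big)\ge 1-\alpha_0$. (ii) If moreover the whole DP-SCP mechanism $D\mapsto(\theta,\hat q)$ is $f$-DP (add/remove adjacency), then when DP-SCP is run on $D_n$, producing $(\theta_n,\hat q)$, one has $\mathbb P\big(s(Z_{n+1};\theta_n)\le\hat q\big)\ge f(\alpha_0)$.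
   Context: Algorithm 2 (Buffered DP Right-Endpoint Binary Search) on scores $S_1,\dots,S_m$: set $\tau=\sigma\Phi^{-1}(1-\beta/N)-1$, $r'=r+m_n+\tau$, $\texttt{left}=a$, $\texttt{right}=b$; for $k=1,\dots,N$: $\texttt{mid}=(\texttt{left}+\texttt{right})/2$, $\tilde C_k=\#\{i:S_i\le\texttt{mid}\}+Z_k$ with $Z_k\sim\mathcal N(0,\sigma^2)$ independent of everything else; if $\tilde C_k\ge r'$ set $\texttt{right}=\texttt{mid}$ else $\texttt{left}=\texttt{mid}$; output $\hat q=\texttt{right}$. $\Phi$ is the standard normal CDF. A training mechanism is permutation invariant if its output distribution does not depend on the order of the input data. $s(Z;\theta)$ is a fixed non-conformity score. Trade-off function $T(P,Q)(\alpha)=\inf_\phi\{1-\mathbb E_Q\phi:\mathbb E_P\phi\le\alpha\}$; $M$ is $f$-DP if $T(M(D),M(D'))\ge f$ for all $D,D'$ differing by adding/removing one entry; $f$ is convex, continuous, non-increasing with $f(\alpha)\le1-\alpha$. *)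

theory Defs
  imports "HOL-Probability.Probability"
begin

definition Phi :: "real \<Rightarrow> real" where
  "Phi x = measure (density lborel std_normal_density) {..x}"

definition Phi_inv :: "real \<Rightarrow> real" where
  "Phi_inv p = (THE x. Phi x = p)"

text \<open>One step of the search: state is (left, right); noise Zs k is Z_(k+1).\<close>
definition bs_step :: "real list \<Rightarrow> real \<Rightarrow> (nat \<Rightarrow> real) \<Rightarrow> nat \<Rightarrow> real \<times> real \<Rightarrow> real \<times> real" where
  "bs_step S r' Zs k lr =
     (let mid = (fst lr + snd lr) / 2;
          C = real (length (filter (\<lambda>x. x \<le> mid) S)) + Zs k
      in if C \<ge> r' then (fst lr, mid) else (mid, snd lr))"

text \<open>Output of Algorithm 2 on scores S for a fixed realisation Zs of the noise
  (Zs 0, ..., Zs (N-1) play the role of Z_1, ..., Z_N).\<close>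
definition alg2 :: "real \<Rightarrow> nat \<Rightarrow> real \<Rightarrow> nat \<Rightarrow> real \<Rightarrow> real \<Rightarrow> real \<Rightarrow> real list \<Rightarrow> (nat \<Rightarrow> real) \<Rightarrow> real" where
  "alg2 \<sigma> N \<beta> r mn a b S Zs =
     (let \<tau> = \<sigma> * Phi_inv (1 - \<beta> / real N) - 1;
          r' = real r + mn + \<tau>
      in snd (fold (bs_step S r' Zs) [0..<N] (a, b)))"

definition noise_space :: "real \<Rightarrow> nat \<Rightarrow> (nat \<Rightarrow> real) measure" where
  "noise_space \<sigma> N = PiM {..<N} (\<lambda>_. density lborel (normal_density 0 \<sigma>))"

definition dpscp ::
  "('z list \<Rightarrow> 'th measure) \<Rightarrow> 'th measure \<Rightarrow> ('z \<Rightarrow> 'th \<Rightarrow> real) \<Rightarrow>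
   real \<Rightarrow> nat \<Rightarrow> real \<Rightarrow> nat \<Rightarrow> real \<Rightarrow> real \<Rightarrow> real \<Rightarrow> 'z list \<Rightarrow> ('th \<times> real) measure" where
  "dpscp Mtr \<Theta> s \<sigma> N \<beta> r mn a b D =
     Mtr D \<bind> (\<lambda>\<theta>. distr (noise_space \<sigma> N) (\<Theta> \<Otimes>\<^sub>M borel)
                    (\<lambda>Zs. (\<theta>, alg2 \<sigma> N \<beta> r mn a b (map (\<lambda>z. s z \<theta>) D) Zs)))"

definition tradeoff :: "'a measure \<Rightarrow> 'a measure \<Rightarrow> real \<Rightarrow> real" where
  "tradeoff Pm Qm \<alpha> = Inf {1 - (\<integral>x. \<phi> x \<partial>Qm) | \<phi>.
       \<phi> \<in> borel_measurable Pm \<and> (\<forall>x\<in>space Pm. 0 \<le> \<phi> x \<and> \<phi> x \<le> 1)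
       \<and> (\<integral>x. \<phi> x \<partial>Pm) \<le> \<alpha>}"

definition adjacent :: "'z list \<Rightarrow> 'z list \<Rightarrow> bool" where
  "adjacent D D' \<longleftrightarrow> (\<exists>xs ys z. (D = xs @ ys \<and> D' = xs @ z # ys) \<or> (D' = xs @ ys \<and> D = xs @ z # ys))"

definition f_DP :: "('z list \<Rightarrow> 'a measure) \<Rightarrow> (real \<Rightarrow> real) \<Rightarrow> bool" where
  "f_DP M f \<longleftrightarrow> (\<forall>D D'. adjacent D D' \<longrightarrow> (\<forall>\<alpha>\<in>{0..1}. tradeoff (M D) (M D') \<alpha> \<ge> f \<alpha>))"

definition tradeoff_fun :: "(real \<Rightarrow> real) \<Rightarrow> bool" where
  "tradeoff_fun f \<longleftrightarrow> convex_on {0..1} f \<and> continuous_on {0..1} f \<and>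
     (\<forall>x\<in>{0..1}. \<forall>y\<in>{0..1}. x \<le> y \<longrightarrow> f y \<le> f x) \<and> (\<forall>x\<in>{0..1}. f x \<le> 1 - x)"

end

theory Submission
  imports Defs
begin


abbreviation "Std \<equiv> density lborel std_normal_density"

lemma Std_prob: "prob_space Std"
  by (rule prob_space_normal_density) simp

lemma Std_real: "real_distribution Std"
  unfolding real_distribution_def real_distribution_axioms_def using Std_prob by simp

lemma Phi_cdf: "Phi = cdf Std"
  by (rule ext) (simp add: Phi_def cdf_def)

lemma Std_single: "measure Std {x} = 0"
proof -
  have "emeasure Std {x} = 0"
    by (subst emeasure_density) (auto intro: nn_integral_null_set)
  then show ?thesis by (simp add: measure_def)
qed

lemma Phi_cont: "isCont Phi x"
proof -
  interpret real_distribution Std by (rule Std_real)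
  show ?thesis unfolding Phi_cdf using isCont_cdf Std_single by simp
qed

lemma Phi_strict: assumes "x < y" shows "Phi x < Phi y"
proof -
  interpret real_distribution Std by (rule Std_real)
  have "Phi y - Phi x = measure Std {x<..y}" unfolding Phi_cdf using cdf_diff_eq assms by simp
  moreover have "measure Std {x<..y} \<noteq> 0"
  proof
    assume "measure Std {x<..y} = 0"
    then have "{x<..y} \<in> null_sets Std" using emeasure_eq_measure by (auto simp: null_sets_def)
    then have "AE z in lborel. z \<in> {x<..y} \<longrightarrow> std_normal_density z = 0"
      by (subst (asm) null_sets_density_iff) auto
    moreover have "\<And>z. std_normal_density z \<noteq> 0" by (metis normal_density_pos zero_less_one less_irrefl)
    ultimately have "AE z in lborel. z \<notin> {x<..y}" by (auto elim!: eventually_mono)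
    then have "{x<..y} \<in> null_sets lborel" by (subst AE_iff_null_sets) auto
    then have "emeasure lborel {x<..y} = 0" by (simp add: null_sets_def)
    then show False using assms by simp
  qed
  moreover have "measure Std {x<..y} \<ge> 0" by simp
  ultimately show ?thesis by linarith
qed

lemma Phi_mono: "x \<le> y \<Longrightarrow> Phi x \<le> Phi y"
  using Phi_strict[of x y] by (cases "x = y") auto

lemma Phi_exists: assumes "0 < p" "p < 1" shows "\<exists>t. Phi t = p"
proof -
  interpret real_distribution Std by (rule Std_real)
  have "(Phi \<longlongrightarrow> 0) at_bot" unfolding Phi_cdf by (rule cdf_lim_at_bot)
  then have "eventually (\<lambda>t. Phi t < p) at_bot" using assms order_tendstoD(2) by blast
  then obtain a where a: "Phi a < p" by (auto simp: eventually_at_bot_linorder)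
  have "(Phi \<longlongrightarrow> 1) at_top" unfolding Phi_cdf by (rule cdf_lim_at_top_prob)
  then have "eventually (\<lambda>t. Phi t > p) at_top" using assms order_tendstoD(1) by blast
  then obtain b where b: "Phi b > p" by (auto simp: eventually_at_top_linorder)
  have ab: "a \<le> b"
  proof (rule ccontr)
    assume "\<not> a \<le> b" then have "Phi b \<le> Phi a" by (intro Phi_mono) simp
    then show False using a b by simp
  qed
  have "continuous_on {a..b} Phi" by (intro continuous_at_imp_continuous_on) (auto intro: Phi_cont)
  from IVT'[of Phi a p b, OF _ _ ab this] a b obtain x where "Phi x = p" by force
  then show ?thesis by blast
qed

lemma Phi_Phi_inv: assumes "0 < p" "p < 1" shows "Phi (Phi_inv p) = p"
proof -
  obtain t where t: "Phi t = p" using Phi_exists assms by blast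
  have uniq: "x = t" if x: "Phi x = p" for x
  proof (rule ccontr)
    assume "x \<noteq> t"
    then consider "x < t" | "t < x" by linarith
    then show False
    proof cases
      case 1 then have "Phi x < Phi t" by (rule Phi_strict)
      then show False using t x by simp
    next
      case 2 then have "Phi t < Phi x" by (rule Phi_strict)
      then show False using t x by simp
    qed
  qed
  have "Phi_inv p = t" unfolding Phi_inv_def by (rule the_equality[where P="\<lambda>x. Phi x = p", OF t uniq])
  then show ?thesis using t by simp
qed



lemma normal_scale:
  assumes s: "\<sigma> > 0"
  shows "measure (density lborel (normal_density 0 \<sigma>)) {\<sigma> * t..} = 1 - Phi t"
proof -
  let ?G = "density lborel (normal_density 0 \<sigma>)"
  interpret G: prob_space ?G by (rule prob_space_normal_density) (rule s)
  have d: "distributed ?G lborel (\<lambda>x. x) (normal_density 0 \<sigma>)"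
    unfolding distributed_def
    by (auto simp: distr_id2)
  have "distributed ?G lborel (\<lambda>x. (x - 0) / \<sigma>) std_normal_density"
    using G.normal_standard_normal_convert[OF s] d by simp
  then have dd: "distr ?G lborel (\<lambda>x. x / \<sigma>) = Std" unfolding distributed_def by simp
  have "measure ?G {\<sigma> * t..} = measure ?G ((\<lambda>x. x / \<sigma>) -` {t..} \<inter> space ?G)"
    using s by (intro arg_cong[where f="measure ?G"]) (auto simp: field_simps)
  also have "\<dots> = measure (distr ?G lborel (\<lambda>x. x / \<sigma>)) {t..}"
    by (rule measure_distr[symmetric]) auto
  also have "\<dots> = measure Std {t..}" using dd by simp
  also have "\<dots> = 1 - Phi t"
  proof -
    interpret S: prob_space Std by (rule Std_prob)
    have "measure Std ({..t} \<union> {t<..}) = measure Std {..t} + measure Std {t<..}"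
      by (rule S.finite_measure_Union) auto
    moreover have "{..t} \<union> {t<..} = space Std" by auto
    moreover have "measure Std ({t<..} \<union> {t}) = measure Std {t<..} + measure Std {t}"
      by (rule S.finite_measure_Union) auto
    moreover have "{t<..} \<union> {t} = {t..}" by auto
    moreover have "measure Std (space Std) = 1" by (rule S.prob_space)
    ultimately show ?thesis using Std_single[of t] by (simp add: Phi_def)
  qed
  finally show ?thesis .
qed

lemma noise_prob:
  assumes s: "\<sigma> > 0" and N: "N \<ge> 1" and b: "0 < \<beta>" "\<beta> < 1"
  shows "measure (noise_space \<sigma> N) {Zs \<in> space (noise_space \<sigma> N). \<forall>k<N. Zs k < \<sigma> * Phi_inv (1 - \<beta> / real N)} \<ge> 1 - \<beta>"
proof -
  let ?G = "density lborel (normal_density 0 \<sigma>)"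
  let ?M = "noise_space \<sigma> N"
  define c where "c = \<sigma> * Phi_inv (1 - \<beta> / real N)"
  have Gp: "prob_space ?G" by (rule prob_space_normal_density) (rule s)
  interpret M: prob_space ?M unfolding noise_space_def by (intro prob_space_PiM Gp)
  have p: "0 < 1 - \<beta> / real N" "1 - \<beta> / real N < 1" using N b by (auto simp: field_simps)
  have Gc: "measure ?G {c..} = \<beta> / real N"
    unfolding c_def normal_scale[OF s] Phi_Phi_inv[OF p] by simp
  define A where "A k = {Zs \<in> space ?M. c \<le> Zs k}" for k
  have Asets: "A k \<in> sets ?M" if "k < N" for k
  proof -
    have "A k = (\<lambda>\<omega>. \<omega> k) -` {c..} \<inter> space ?M" by (auto simp: A_def)
    also have "\<dots> \<in> sets ?M" unfolding noise_space_def
      by (rule measurable_sets[OF measurable_component_singleton]) (use that in auto)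
    finally show ?thesis .
  qed
  have Ak: "measure ?M (A k) = \<beta> / real N" if k: "k < N" for k
  proof -
    have "measure ?M (A k) = measure ?M ((\<lambda>\<omega>. \<omega> k) -` {c..} \<inter> space ?M)"
      unfolding A_def by (intro arg_cong[where f="measure ?M"]) auto
    also have "\<dots> = measure (distr ?M ?G (\<lambda>\<omega>. \<omega> k)) {c..}"
      by (rule measure_distr[symmetric]) (use k in \<open>auto simp: noise_space_def\<close>)
    also have "distr ?M ?G (\<lambda>\<omega>. \<omega> k) = ?G"
      unfolding noise_space_def by (rule distr_PiM_component) (use k Gp in auto)
    finally show ?thesis using Gc by simp
  qed
  have eqU: "space ?M - {Zs \<in> space ?M. \<forall>k<N. Zs k < c} = (\<Union>k\<in>{..<N}. A k)"
    unfolding A_def by (auto simp: not_less)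
  have "measure ?M (\<Union>k\<in>{..<N}. A k) \<le> (\<Sum>k\<in>{..<N}. measure ?M (A k))"
    by (rule M.finite_measure_subadditive_finite) (use Asets in auto)
  moreover have "(\<Sum>k\<in>{..<N}. measure ?M (A k)) = \<beta>" using Ak N by simp
  ultimately have le: "measure ?M (space ?M - {Zs \<in> space ?M. \<forall>k<N. Zs k < c}) \<le> \<beta>" unfolding eqU by simp
  have "measure ?M (space ?M - {Zs \<in> space ?M. \<forall>k<N. Zs k < c}) = 1 - measure ?M {Zs \<in> space ?M. \<forall>k<N. Zs k < c}"
    by (rule M.prob_compl) (unfold noise_space_def, measurable)
  then show ?thesis using le unfolding c_def by linarith
qed



lemma length_filter_mono_imp:
  assumes "\<And>x. x \<in> set xs \<Longrightarrow> P x \<Longrightarrow> Q x"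
  shows "length (filter P xs) \<le> length (filter Q xs)"
  using assms by (induction xs) auto

lemma fold_inv:
  fixes S :: "real list"
  assumes mn: "mn \<ge> 0"
  shows "(\<forall>k\<in>set ks. Zs k < \<tau> + 1) \<Longrightarrow> r \<le> length (filter (\<lambda>x. x \<le> snd lr) S) \<Longrightarrow>
     r \<le> length (filter (\<lambda>x. x \<le> snd (fold (bs_step S (real r + mn + \<tau>) Zs) ks lr)) S)"
proof (induction ks arbitrary: lr)
  case Nil then show ?case by simp
next
  case (Cons k ks)
  let ?mid = "(fst lr + snd lr) / 2"
  let ?c = "length (filter (\<lambda>x. x \<le> ?mid) S)"
  have st: "r \<le> length (filter (\<lambda>x. x \<le> snd (bs_step S (real r + mn + \<tau>) Zs k lr)) S)"
  proof (cases "real ?c + Zs k \<ge> real r + mn + \<tau>")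
    case True
    have "Zs k < \<tau> + 1" using Cons.prems by simp
    then have "real r < real ?c + 1" using True mn by linarith
    then have "r \<le> ?c" by linarith
    then show ?thesis using True by (simp add: bs_step_def Let_def)
  next
    case False
    then show ?thesis using Cons.prems by (simp add: bs_step_def Let_def)
  qed
  show ?case using Cons.IH[OF _ st] Cons.prems by simp
qed

lemma alg2_count:
  fixes S :: "real list"
  assumes "\<forall>x\<in>set S. x < b" "r \<le> length S" "mn \<ge> 0"
    "\<forall>k<N. Zs k < \<sigma> * Phi_inv (1 - \<beta> / real N)"
  shows "r \<le> length (filter (\<lambda>x. x \<le> alg2 \<sigma> N \<beta> r mn a b S Zs) S)"
proof -
  let ?\<tau> = "\<sigma> * Phi_inv (1 - \<beta> / real N) - 1"
  have "filter (\<lambda>x. x \<le> b) S = S" using assms(1) by (intro filter_True) auto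
  then have "r \<le> length (filter (\<lambda>x. x \<le> snd (a, b)) S)" using assms(2) by simp
  from fold_inv[OF assms(3), of "[0..<N]" Zs ?\<tau>, OF _ this] assms(4)
  show ?thesis unfolding alg2_def Let_def by simp
qed

lemma cover_of_count:
  fixes S :: "real list"
  assumes "length (filter (\<lambda>x. x < y) S) < r" "r \<le> length (filter (\<lambda>x. x \<le> q) S)"
  shows "y \<le> q"
proof (rule ccontr)
  assume "\<not> y \<le> q"
  then have "length (filter (\<lambda>x. x \<le> q) S) \<le> length (filter (\<lambda>x. x < y) S)"
    by (intro length_filter_mono_imp) auto
  then show False using assms by linarith
qed



lemma many_small:
  fixes S :: "real list"
  assumes r: "r \<le> length S"
  shows "r \<le> card {i. i < length S \<and> length (filter (\<lambda>x. x < S!i) S) < r}"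
proof (rule ccontr)
  define T where "T = {i. i < length S \<and> length (filter (\<lambda>x. x < S!i) S) < r}"
  assume "\<not> r \<le> card {i. i < length S \<and> length (filter (\<lambda>x. x < S!i) S) < r}"
  then have cT: "card T < r" unfolding T_def by simp
  define C where "C = {..<length S} - T"
  have fin: "finite C" unfolding C_def by simp
  have "T \<subseteq> {..<length S}" unfolding T_def by auto
  have "C \<noteq> {}"
  proof
    assume "C = {}"
    then have "{..<length S} \<subseteq> T" unfolding C_def by auto
    then have "card {..<length S} \<le> card T" by (intro card_mono) (auto simp: T_def)
    then show False using cT r by simp
  qed
  define v where "v = Min ((\<lambda>i. S!i) ` C)"
  have "v \<in> (\<lambda>i. S!i) ` C" unfolding v_def using fin \<open>C \<noteq> {}\<close> by (intro Min_in) auto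
  then obtain i0 where i0: "i0 \<in> C" "S!i0 = v" by auto
  have sub: "{j. j < length S \<and> S!j < S!i0} \<subseteq> T"
  proof
    fix j assume j: "j \<in> {j. j < length S \<and> S!j < S!i0}"
    show "j \<in> T"
    proof (rule ccontr)
      assume "j \<notin> T"
      then have "j \<in> C" using j unfolding C_def by auto
      then have "v \<le> S!j" unfolding v_def using fin by (intro Min_le) auto
      then show False using j i0 by simp
    qed
  qed
  have "length (filter (\<lambda>x. x < S!i0) S) = card {j. j < length S \<and> S!j < S!i0}"
    by (rule length_filter_conv_card)
  also have "\<dots> \<le> card T" using sub by (intro card_mono) (auto simp: T_def)
  finally have "i0 \<in> T" using cT i0 unfolding C_def T_def by auto
  then show False using i0 unfolding C_def by auto
qed



lemma count_meas:
  fixes Ss :: "('w \<Rightarrow> real) list"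
  assumes "\<forall>g\<in>set Ss. g \<in> borel_measurable W" and h: "h \<in> borel_measurable (W \<Otimes>\<^sub>M M)"
  shows "(\<lambda>x. real (length (filter (\<lambda>y. y \<le> h x) (map (\<lambda>g. g (fst x)) Ss)))) \<in> borel_measurable (W \<Otimes>\<^sub>M M)"
  using assms(1)
proof (induction Ss)
  case Nil then show ?case by simp
next
  case (Cons g Ss)
  have g: "g \<in> borel_measurable W" using Cons.prems by simp
  have IH: "(\<lambda>x. real (length (filter (\<lambda>y. y \<le> h x) (map (\<lambda>g. g (fst x)) Ss)))) \<in> borel_measurable (W \<Otimes>\<^sub>M M)"
    using Cons by simp
  have eq: "(\<lambda>x. real (length (filter (\<lambda>y. y \<le> h x) (map (\<lambda>g. g (fst x)) (g # Ss))))) =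
     (\<lambda>x. (if g (fst x) \<le> h x then 1 else 0) + real (length (filter (\<lambda>y. y \<le> h x) (map (\<lambda>g. g (fst x)) Ss))))"
    by (rule ext) simp
  have gf: "(\<lambda>x. g (fst x)) \<in> borel_measurable (W \<Otimes>\<^sub>M M)" by (rule measurable_compose[OF measurable_fst g])
  have "{x\<in>space (W \<Otimes>\<^sub>M M). g (fst x) \<le> h x} \<in> sets (W \<Otimes>\<^sub>M M)" by (rule borel_measurable_le[OF gf h])
  then have "(\<lambda>x. if g (fst x) \<le> h x then 1 else (0::real)) \<in> borel_measurable (W \<Otimes>\<^sub>M M)"
    by (intro measurable_If) auto
  then show ?case unfolding eq by (rule borel_measurable_add[OF _ IH])
qed

lemma noise_comp:
  assumes "k < N"
  shows "(\<lambda>x. snd x k) \<in> borel_measurable (W \<Otimes>\<^sub>M noise_space \<sigma> N)"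
proof -
  have "(\<lambda>Zs. Zs k) \<in> measurable (noise_space \<sigma> N) (density lborel (normal_density 0 \<sigma>))"
    unfolding noise_space_def by (rule measurable_component_singleton) (use assms in simp)
  moreover have "measurable (noise_space \<sigma> N) (density lborel (normal_density 0 \<sigma>)) = measurable (noise_space \<sigma> N) borel"
    by (rule measurable_cong_sets) simp_all
  ultimately have "(\<lambda>Zs. Zs k) \<in> borel_measurable (noise_space \<sigma> N)" by simp
  then show ?thesis by (rule measurable_compose[OF measurable_snd])
qed

lemma fold_meas:
  fixes Ss :: "('w \<Rightarrow> real) list"
  assumes Ss: "\<forall>g\<in>set Ss. g \<in> borel_measurable W"
  shows "set ks \<subseteq> {..<N} \<Longrightarrow> l \<in> borel_measurable (W \<Otimes>\<^sub>M noise_space \<sigma> N) \<Longrightarrow> u \<in> borel_measurable (W \<Otimes>\<^sub>M noise_space \<sigma> N) \<Longrightarrow>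
    (\<lambda>x. fst (fold (bs_step (map (\<lambda>g. g (fst x)) Ss) r' (snd x)) ks (l x, u x))) \<in> borel_measurable (W \<Otimes>\<^sub>M noise_space \<sigma> N) \<and>
    (\<lambda>x. snd (fold (bs_step (map (\<lambda>g. g (fst x)) Ss) r' (snd x)) ks (l x, u x))) \<in> borel_measurable (W \<Otimes>\<^sub>M noise_space \<sigma> N)"
proof (induction ks arbitrary: l u)
  case Nil then show ?case by simp
next
  case (Cons k ks)
  have k: "k < N" using Cons.prems by simp
  let ?mid = "\<lambda>x. (l x + u x) / 2"
  have mm: "?mid \<in> borel_measurable (W \<Otimes>\<^sub>M noise_space \<sigma> N)"
    by (intro borel_measurable_divide borel_measurable_add Cons.prems measurable_const) simp
  note cm = count_meas[OF Ss mm]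
  define C where "C x = real (length (filter (\<lambda>y. y \<le> ?mid x) (map (\<lambda>g. g (fst x)) Ss))) + snd x k" for x
  have Cm: "C \<in> borel_measurable (W \<Otimes>\<^sub>M noise_space \<sigma> N)" unfolding C_def
    by (rule borel_measurable_add[OF cm noise_comp[OF k]])
  have Cs: "{x\<in>space (W \<Otimes>\<^sub>M noise_space \<sigma> N). r' \<le> C x} \<in> sets (W \<Otimes>\<^sub>M noise_space \<sigma> N)"
    by (rule borel_measurable_le[OF measurable_const Cm]) simp
  define l' where "l' x = (if C x \<ge> r' then l x else ?mid x)" for x
  define u' where "u' x = (if C x \<ge> r' then ?mid x else u x)" for x
  have lm: "l' \<in> borel_measurable (W \<Otimes>\<^sub>M noise_space \<sigma> N)" unfolding l'_def
    by (rule measurable_If[OF Cons.prems(2) mm Cs])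
  have um: "u' \<in> borel_measurable (W \<Otimes>\<^sub>M noise_space \<sigma> N)" unfolding u'_def
    by (rule measurable_If[OF mm Cons.prems(3) Cs])
  have eq: "bs_step (map (\<lambda>g. g (fst x)) Ss) r' (snd x) k (l x, u x) = (l' x, u' x)" for x
    unfolding bs_step_def Let_def l'_def u'_def C_def by simp
  have IH: "(\<lambda>x. fst (fold (bs_step (map (\<lambda>g. g (fst x)) Ss) r' (snd x)) ks (l' x, u' x))) \<in> borel_measurable (W \<Otimes>\<^sub>M noise_space \<sigma> N) \<and>
    (\<lambda>x. snd (fold (bs_step (map (\<lambda>g. g (fst x)) Ss) r' (snd x)) ks (l' x, u' x))) \<in> borel_measurable (W \<Otimes>\<^sub>M noise_space \<sigma> N)"
    by (rule Cons.IH[OF _ lm um]) (use Cons.prems(1) in simp)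
  show ?case unfolding fold_Cons comp_def eq by (rule IH)
qed

lemma alg2_meas:
  fixes Ss :: "('w \<Rightarrow> real) list"
  assumes Ss: "\<forall>g\<in>set Ss. g \<in> borel_measurable W"
  shows "(\<lambda>x. alg2 \<sigma> N \<beta> r mn a b (map (\<lambda>g. g (fst x)) Ss) (snd x)) \<in> borel_measurable (W \<Otimes>\<^sub>M noise_space \<sigma> N)"
proof -
  have st: "set [0..<N] \<subseteq> {..<N}" by auto
  have m: "(\<lambda>_. a) \<in> borel_measurable (W \<Otimes>\<^sub>M noise_space \<sigma> N)" "(\<lambda>_. b) \<in> borel_measurable (W \<Otimes>\<^sub>M noise_space \<sigma> N)" by auto
  note F = fold_meas[OF Ss st m, where r'="real r + mn + (\<sigma> * Phi_inv (1 - \<beta> / real N) - 1)"]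
  show ?thesis unfolding alg2_def Let_def by (rule conjunct2[OF F])
qed



lemma noise_prob_space: "\<sigma> > 0 \<Longrightarrow> prob_space (noise_space \<sigma> N)"
  unfolding noise_space_def by (intro prob_space_PiM prob_space_normal_density)

lemma score_slice:
  assumes sm: "(\<lambda>(z, \<theta>). s z \<theta>) \<in> borel_measurable (P \<Otimes>\<^sub>M \<Theta>)" and z: "z \<in> space P"
  shows "(\<lambda>\<theta>. s z \<theta>) \<in> borel_measurable \<Theta>"
  using measurable_Pair2[OF sm z] by simp

lemma K_meas:
  assumes sig: "\<sigma> > 0" and sm: "(\<lambda>(z, \<theta>). s z \<theta>) \<in> borel_measurable (P \<Otimes>\<^sub>M \<Theta>)"
    and D: "set D \<subseteq> space P"
  shows "(\<lambda>\<theta>. distr (noise_space \<sigma> N) (\<Theta> \<Otimes>\<^sub>M borel) (\<lambda>Zs. (\<theta>, alg2 \<sigma> N \<beta> r mn a b (map (\<lambda>z. s z \<theta>) D) Zs)))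
     \<in> measurable \<Theta> (subprob_algebra (\<Theta> \<Otimes>\<^sub>M borel))"
proof -
  let ?Ss = "map (\<lambda>z \<theta>. s z \<theta>) D"
  have Ss: "\<forall>g\<in>set ?Ss. g \<in> borel_measurable \<Theta>" using D score_slice[OF sm] by auto
  have am: "(\<lambda>x. alg2 \<sigma> N \<beta> r mn a b (map (\<lambda>z. s z (fst x)) D) (snd x)) \<in> borel_measurable (\<Theta> \<Otimes>\<^sub>M noise_space \<sigma> N)"
    using alg2_meas[OF Ss, of \<sigma> N \<beta> r mn a b] by (simp add: comp_def)
  have f: "case_prod (\<lambda>\<theta> Zs. (\<theta>, alg2 \<sigma> N \<beta> r mn a b (map (\<lambda>z. s z \<theta>) D) Zs)) \<in> measurable (\<Theta> \<Otimes>\<^sub>M noise_space \<sigma> N) (\<Theta> \<Otimes>\<^sub>M borel)"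
    using measurable_Pair[OF measurable_fst am] by (simp add: case_prod_beta')
  have g: "(\<lambda>_. noise_space \<sigma> N) \<in> measurable \<Theta> (subprob_algebra (noise_space \<sigma> N))"
    using noise_prob_space[OF sig, of N]
    by (intro measurable_const) (auto simp: space_subprob_algebra intro: prob_space_imp_subprob_space)
  show ?thesis by (rule measurable_distr2[OF f g])
qed

lemma K_fun_meas:
  assumes sm: "(\<lambda>(z, \<theta>). s z \<theta>) \<in> borel_measurable (P \<Otimes>\<^sub>M \<Theta>)"
    and D: "set D \<subseteq> space P" and th': "\<theta> \<in> space \<Theta>"
  shows "(\<lambda>Zs. (\<theta>, alg2 \<sigma> N \<beta> r mn a b (map (\<lambda>z. s z \<theta>) D) Zs)) \<in> measurable (noise_space \<sigma> N) (\<Theta> \<Otimes>\<^sub>M borel)"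
proof -
  let ?Ss = "map (\<lambda>z \<theta>. s z \<theta>) D"
  have Ss: "\<forall>g\<in>set ?Ss. g \<in> borel_measurable \<Theta>" using D score_slice[OF sm] by auto
  have am: "(\<lambda>x. alg2 \<sigma> N \<beta> r mn a b (map (\<lambda>z. s z (fst x)) D) (snd x)) \<in> borel_measurable (\<Theta> \<Otimes>\<^sub>M noise_space \<sigma> N)"
    using alg2_meas[OF Ss, of \<sigma> N \<beta> r mn a b] by (simp add: comp_def)
  have "(\<lambda>Zs. alg2 \<sigma> N \<beta> r mn a b (map (\<lambda>z. s z \<theta>) D) Zs) \<in> borel_measurable (noise_space \<sigma> N)"
    using measurable_Pair2[OF am th'] by simp
  then show ?thesis using th' by (intro measurable_Pair) auto
qed

lemma dpscp_facts:
  assumes sig: "\<sigma> > 0" and sm: "(\<lambda>(z, \<theta>). s z \<theta>) \<in> borel_measurable (P \<Otimes>\<^sub>M \<Theta>)"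
    and D: "set D \<subseteq> space P" and Mp: "prob_space (Mtr D)" and Ms: "sets (Mtr D) = sets \<Theta>"
  shows "prob_space (dpscp Mtr \<Theta> s \<sigma> N \<beta> r mn a b D)"
    and "sets (dpscp Mtr \<Theta> s \<sigma> N \<beta> r mn a b D) = sets (\<Theta> \<Otimes>\<^sub>M borel)"
    and "X \<in> sets (\<Theta> \<Otimes>\<^sub>M borel) \<Longrightarrow> emeasure (dpscp Mtr \<Theta> s \<sigma> N \<beta> r mn a b D) X =
       (\<integral>\<^sup>+\<theta>. emeasure (noise_space \<sigma> N) {Zs \<in> space (noise_space \<sigma> N). (\<theta>, alg2 \<sigma> N \<beta> r mn a b (map (\<lambda>z. s z \<theta>) D) Zs) \<in> X} \<partial>Mtr D)"
proof -
  let ?K = "\<lambda>\<theta>. distr (noise_space \<sigma> N) (\<Theta> \<Otimes>\<^sub>M borel) (\<lambda>Zs. (\<theta>, alg2 \<sigma> N \<beta> r mn a b (map (\<lambda>z. s z \<theta>) D) Zs))"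
  have K: "?K \<in> measurable (Mtr D) (subprob_algebra (\<Theta> \<Otimes>\<^sub>M borel))"
    using K_meas[OF sig sm D] measurable_cong_sets[OF Ms refl] by blast
  interpret M: prob_space "Mtr D" by (rule Mp)
  have ne: "space (Mtr D) \<noteq> {}" by (rule M.not_empty)
  have dp: "dpscp Mtr \<Theta> s \<sigma> N \<beta> r mn a b D = Mtr D \<bind> ?K" unfolding dpscp_def by simp
  have Ksets: "sets (?K \<theta>) = sets (\<Theta> \<Otimes>\<^sub>M borel)" for \<theta> by (rule sets_distr)
  have Kp: "prob_space (?K \<theta>)" if "\<theta> \<in> space (Mtr D)" for \<theta>
  proof -
    interpret NS: prob_space "noise_space \<sigma> N" by (rule noise_prob_space[OF sig])
    have th': "\<theta> \<in> space \<Theta>" using that sets_eq_imp_space_eq[OF Ms] by simp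
    show ?thesis
      by (rule NS.prob_space_distr) (rule K_fun_meas[OF sm D th'])
  qed
  show "prob_space (dpscp Mtr \<Theta> s \<sigma> N \<beta> r mn a b D)" unfolding dp
    by (rule M.prob_space_bind[OF AE_I2[OF Kp] K])
  show "sets (dpscp Mtr \<Theta> s \<sigma> N \<beta> r mn a b D) = sets (\<Theta> \<Otimes>\<^sub>M borel)" unfolding dp
    by (rule sets_bind[OF Ksets ne])
  assume X: "X \<in> sets (\<Theta> \<Otimes>\<^sub>M borel)"
  have "emeasure (Mtr D \<bind> ?K) X = (\<integral>\<^sup>+\<theta>. emeasure (?K \<theta>) X \<partial>Mtr D)"
    by (rule emeasure_bind[OF ne K X])
  also have "\<dots> = (\<integral>\<^sup>+\<theta>. emeasure (noise_space \<sigma> N) {Zs \<in> space (noise_space \<sigma> N). (\<theta>, alg2 \<sigma> N \<beta> r mn a b (map (\<lambda>z. s z \<theta>) D) Zs) \<in> X} \<partial>Mtr D)"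
  proof (rule nn_integral_cong)
    fix \<theta> assume th: "\<theta> \<in> space (Mtr D)"
    have th': "\<theta> \<in> space \<Theta>" using th sets_eq_imp_space_eq[OF Ms] by simp
    note mf = K_fun_meas[OF sm D th', of \<sigma> N \<beta> r mn a b]
    show "emeasure (?K \<theta>) X = emeasure (noise_space \<sigma> N) {Zs \<in> space (noise_space \<sigma> N). (\<theta>, alg2 \<sigma> N \<beta> r mn a b (map (\<lambda>z. s z \<theta>) D) Zs) \<in> X}"
      by (subst emeasure_distr[OF mf X]) (auto intro: arg_cong[where f="emeasure _"])
  qed
  finally show "emeasure (dpscp Mtr \<Theta> s \<sigma> N \<beta> r mn a b D) X = (\<integral>\<^sup>+\<theta>. emeasure (noise_space \<sigma> N) {Zs \<in> space (noise_space \<sigma> N). (\<theta>, alg2 \<sigma> N \<beta> r mn a b (map (\<lambda>z. s z \<theta>) D) Zs) \<in> X} \<partial>Mtr D)"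
    unfolding dp .
qed



lemma count_lt_meas:
  fixes fs :: "('w \<Rightarrow> real) list"
  assumes "\<forall>g\<in>set fs. g \<in> borel_measurable M" and h: "h \<in> borel_measurable M"
  shows "(\<lambda>x. real (length (filter (\<lambda>y. y < h x) (map (\<lambda>g. g x) fs)))) \<in> borel_measurable M"
  using assms(1)
proof (induction fs)
  case Nil then show ?case by simp
next
  case (Cons g fs)
  have g: "g \<in> borel_measurable M" using Cons.prems by simp
  have IH: "(\<lambda>x. real (length (filter (\<lambda>y. y < h x) (map (\<lambda>g. g x) fs)))) \<in> borel_measurable M"
    using Cons.IH Cons.prems by simp
  have eq: "(\<lambda>x. real (length (filter (\<lambda>y. y < h x) (map (\<lambda>g. g x) (g # fs))))) =
     (\<lambda>x. (if g x < h x then 1 else 0) + real (length (filter (\<lambda>y. y < h x) (map (\<lambda>g. g x) fs))))"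
    by (rule ext) simp
  have "{x\<in>space M. g x < h x} \<in> sets M" by (rule borel_measurable_less[OF g h])
  moreover have c1: "(\<lambda>x. 1::real) \<in> borel_measurable M" by simp
  moreover have c0: "(\<lambda>x. 0::real) \<in> borel_measurable M" by simp
  ultimately have "(\<lambda>x. if g x < h x then 1 else (0::real)) \<in> borel_measurable M"
    by (intro measurable_If[OF c1 c0])
  then show ?case unfolding eq by (rule borel_measurable_add[OF _ IH])
qed

lemma score_comp:
  assumes sm: "(\<lambda>(z, \<theta>). s z \<theta>) \<in> borel_measurable (P \<Otimes>\<^sub>M \<Theta>)" and i: "i \<in> I"
  shows "(\<lambda>w. s (fst w i) (snd w)) \<in> borel_measurable (PiM I (\<lambda>_. P) \<Otimes>\<^sub>M \<Theta>)"
proof -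
  have c: "(\<lambda>w. fst w i) \<in> measurable (PiM I (\<lambda>_. P) \<Otimes>\<^sub>M \<Theta>) P"
    by (rule measurable_compose[OF measurable_fst measurable_component_singleton[OF i]])
  have "(\<lambda>w. (fst w i, snd w)) \<in> measurable (PiM I (\<lambda>_. P) \<Otimes>\<^sub>M \<Theta>) (P \<Otimes>\<^sub>M \<Theta>)"
    by (rule measurable_Pair[OF c measurable_snd])
  from measurable_compose[OF this sm] show ?thesis by simp
qed

lemma mset_perm_map:
  assumes "bij_betw \<pi> {..<m} {..<m}"
  shows "mset (map (\<lambda>i. f (\<pi> i)) [0..<m]) = mset (map f [0..<m])"
proof -
  have inj: "inj_on \<pi> {..<m}" and im: "\<pi> ` {..<m} = {..<m}" using assms by (auto simp: bij_betw_def)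
  have d: "distinct (map \<pi> [0..<m])" using inj by (simp add: distinct_map atLeast0LessThan)
  have s: "set (map \<pi> [0..<m]) = {..<m}" using im by (simp add: atLeast0LessThan)
  have "mset (map \<pi> [0..<m]) = mset [0..<m]"
    using mset_set_set[OF d] mset_set_set[of "[0..<m]"] s by (simp add: atLeast0LessThan)
  then have "mset (map f (map \<pi> [0..<m])) = mset (map f [0..<m])" by (simp only: mset_map)
  then show ?thesis by (simp only: map_map comp_def)
qed

lemma length_filter_mset:
  assumes "mset xs = mset ys"
  shows "length (filter P xs) = length (filter P ys)"
proof -
  have "length (filter P xs) = size (mset (filter P xs))" by (rule size_mset[symmetric])
  also have "\<dots> = size (filter_mset P (mset xs))" by (simp only: mset_filter)
  also have "\<dots> = size (filter_mset P (mset ys))" using assms by simp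
  also have "\<dots> = size (mset (filter P ys))" by (simp only: mset_filter)
  also have "\<dots> = length (filter P ys)" by (rule size_mset)
  finally show ?thesis .
qed

lemma support_line:
  fixes f :: "real \<Rightarrow> real"
  assumes cv: "convex_on {0..1} f" and mono: "\<forall>x\<in>{0..1}. \<forall>y\<in>{0..1}. x \<le> y \<longrightarrow> f y \<le> f x"
    and x0: "0 < x0" "x0 < 1"
  shows "\<exists>c\<le>0. \<forall>x\<in>{0..1}. f x0 + c * (x - x0) \<le> f x"
proof -
  define S where "S = (\<lambda>y. (f y - f x0) / (y - x0)) ` {x0<..1}"
  define c where "c = Inf S"
  have left: "(f x - f x0) / (x - x0) \<le> (f y - f x0) / (y - x0)" if "0 \<le> x" "x < x0" "x0 < y" "y \<le> 1" for x y
  proof -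
    have "(f x - f x0) / (x - x0) \<le> (f x - f y) / (x - y)"
      using convex_on_slope_le(1)[OF cv, of x y x0] that by auto
    also have "\<dots> \<le> (f x0 - f y) / (x0 - y)"
      using convex_on_slope_le(2)[OF cv, of x y x0] that by auto
    also have "\<dots> = (f y - f x0) / (y - x0)" by (metis minus_diff_eq minus_divide_divide)
    finally show ?thesis .
  qed
  have ne: "S \<noteq> {}" using x0 unfolding S_def by auto
  have bdd: "bdd_below S"
  proof (rule bdd_belowI)
    fix v assume "v \<in> S"
    then obtain y where y: "x0 < y" "y \<le> 1" "v = (f y - f x0) / (y - x0)" unfolding S_def by auto
    show "(f 0 - f x0) / (0 - x0) \<le> v" unfolding y(3) by (rule left) (use x0 y in auto)
  qed
  have c_le: "c \<le> (f y - f x0) / (y - x0)" if "x0 < y" "y \<le> 1" for y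
  proof -
    have "(f y - f x0) / (y - x0) \<in> S" unfolding S_def using that by (intro rev_image_eqI[of y]) auto
    then show ?thesis unfolding c_def by (rule cInf_lower[OF _ bdd])
  qed
  have c_ge: "(f x - f x0) / (x - x0) \<le> c" if "0 \<le> x" "x < x0" for x
    unfolding c_def
  proof (rule cInf_greatest[OF ne])
    fix v assume "v \<in> S"
    then obtain y where y: "x0 < y" "y \<le> 1" "v = (f y - f x0) / (y - x0)" unfolding S_def by auto
    show "(f x - f x0) / (x - x0) \<le> v" unfolding y(3) by (rule left) (use that y in auto)
  qed
  have "c \<le> (f 1 - f x0) / (1 - x0)" using c_le[of 1] x0 by simp
  also have "\<dots> \<le> 0" using mono x0 by (intro divide_nonpos_pos) auto
  finally have c0: "c \<le> 0" .
  have "f x0 + c * (x - x0) \<le> f x" if x: "x \<in> {0..1}" for x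
  proof (cases x x0 rule: linorder_cases)
    case less
    have "(f x - f x0) / (x - x0) \<le> c" using c_ge[of x] x less by auto
    then have "c * (x - x0) \<le> f x - f x0" using less by (simp add: divide_le_eq mult.commute)
    then show ?thesis by simp
  next
    case equal then show ?thesis by simp
  next
    case greater
    have "c \<le> (f x - f x0) / (x - x0)" using c_le[of x] x greater by auto
    then have "c * (x - x0) \<le> f x - f x0" using greater by (simp add: le_divide_eq)
    then show ?thesis by simp
  qed
  then show ?thesis using c0 by blast
qed



lemma zs_in_P:
  assumes "zs \<in> space (PiM {..<Suc n} (\<lambda>_. P))" "i < Suc n"
  shows "zs i \<in> space P"
  using assms by (auto simp: space_PiM PiE_iff)

lemma A_sets:
  fixes s :: "'z \<Rightarrow> 'th \<Rightarrow> real"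
  assumes sm: "(\<lambda>(z, \<theta>). s z \<theta>) \<in> borel_measurable (P \<Otimes>\<^sub>M \<Theta>)" and z: "z \<in> space P"
  shows "{x \<in> space (\<Theta> \<Otimes>\<^sub>M borel). s z (fst x) \<le> snd x} \<in> sets (\<Theta> \<Otimes>\<^sub>M borel)"
proof -
  have f1: "(\<lambda>x. s z (fst x)) \<in> borel_measurable (\<Theta> \<Otimes>\<^sub>M (borel :: real measure))"
    by (rule measurable_compose[OF measurable_fst score_slice[OF sm z]])
  show ?thesis using borel_measurable_le[OF f1 measurable_snd] by simp
qed

lemma mu_meas:
  fixes L :: "nat list" and s :: "'z \<Rightarrow> 'th \<Rightarrow> real"
  assumes sig: "\<sigma> > 0" and sm: "(\<lambda>(z, \<theta>). s z \<theta>) \<in> borel_measurable (P \<Otimes>\<^sub>M \<Theta>)"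
    and tp: "\<And>D. prob_space (Mtr D)" and ts: "\<And>D. sets (Mtr D) = sets \<Theta>"
    and L: "set L \<subseteq> {..<Suc n}"
    and ker: "(\<lambda>zs. Mtr (map zs L)) \<in> measurable (PiM {..<Suc n} (\<lambda>_. P)) (subprob_algebra \<Theta>)"
  shows "(\<lambda>zs. measure (dpscp Mtr \<Theta> s \<sigma> N \<beta> r mn a b (map zs L)) {x \<in> space (\<Theta> \<Otimes>\<^sub>M borel). s (zs n) (fst x) \<le> snd x})
     \<in> borel_measurable (PiM {..<Suc n} (\<lambda>_. P))"
proof -
  let ?\<Omega> = "PiM {..<Suc n} (\<lambda>_. P)"
  let ?W = "?\<Omega> \<Otimes>\<^sub>M \<Theta>"
  let ?NS = "noise_space \<sigma> N"
  define Ss where "Ss = map (\<lambda>i w. s (fst w i) (snd w)) L"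
  have Ss: "\<forall>g\<in>set Ss. g \<in> borel_measurable ?W"
  proof
    fix g assume "g \<in> set Ss"
    then obtain i where i: "i \<in> set L" "g = (\<lambda>w. s (fst w i) (snd w))" unfolding Ss_def by auto
    have "i \<in> {..<Suc n}" using i L by auto
    then show "g \<in> borel_measurable ?W" unfolding i(2) by (rule score_comp[OF sm])
  qed
  have sn: "(\<lambda>w. s (fst w n) (snd w)) \<in> borel_measurable ?W" by (rule score_comp[OF sm]) simp
  define Q where "Q = {x \<in> space (?W \<Otimes>\<^sub>M ?NS). s (fst (fst x) n) (snd (fst x)) \<le> alg2 \<sigma> N \<beta> r mn a b (map (\<lambda>g. g (fst x)) Ss) (snd x)}"
  have Qs: "Q \<in> sets (?W \<Otimes>\<^sub>M ?NS)" unfolding Q_def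
    by (rule borel_measurable_le[OF measurable_compose[OF measurable_fst sn] alg2_meas[OF Ss]])
  interpret NS: prob_space ?NS by (rule noise_prob_space[OF sig])
  define h where "h w = emeasure ?NS (Pair w -` Q)" for w
  have hm: "h \<in> borel_measurable ?W" unfolding h_def by (rule NS.measurable_emeasure_Pair[OF Qs])
  have hm': "(\<lambda>(x, y). h (x, y)) \<in> borel_measurable ?W" using hm by (simp add: case_prod_eta)
  have eq: "measure (dpscp Mtr \<Theta> s \<sigma> N \<beta> r mn a b (map zs L)) {x \<in> space (\<Theta> \<Otimes>\<^sub>M borel). s (zs n) (fst x) \<le> snd x}
      = enn2real (\<integral>\<^sup>+\<theta>. h (zs, \<theta>) \<partial>Mtr (map zs L))" if zs: "zs \<in> space ?\<Omega>" for zs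
  proof -
    have D: "set (map zs L) \<subseteq> space P" using L zs_in_P[OF zs] by auto
    have zn: "zs n \<in> space P" by (rule zs_in_P[OF zs]) simp
    note F = dpscp_facts(3)[OF sig sm D tp ts A_sets[OF sm zn], where N=N and \<beta>=\<beta> and r=r and mn=mn and a=a and b=b]
    have "emeasure (dpscp Mtr \<Theta> s \<sigma> N \<beta> r mn a b (map zs L)) {x \<in> space (\<Theta> \<Otimes>\<^sub>M borel). s (zs n) (fst x) \<le> snd x}
        = (\<integral>\<^sup>+\<theta>. h (zs, \<theta>) \<partial>Mtr (map zs L))"
      unfolding F
    proof (rule nn_integral_cong)
      fix \<theta> assume th: "\<theta> \<in> space (Mtr (map zs L))"
      have th': "\<theta> \<in> space \<Theta>" using th sets_eq_imp_space_eq[OF ts] by simp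
      have mm: "map (\<lambda>g. g (zs, \<theta>)) Ss = map (\<lambda>z. s z \<theta>) (map zs L)" unfolding Ss_def by simp
      have "{Zs \<in> space ?NS. (\<theta>, alg2 \<sigma> N \<beta> r mn a b (map (\<lambda>z. s z \<theta>) (map zs L)) Zs) \<in> {x \<in> space (\<Theta> \<Otimes>\<^sub>M borel). s (zs n) (fst x) \<le> snd x}}
          = Pair (zs, \<theta>) -` Q"
        unfolding Q_def using zs th' by (auto simp: space_pair_measure mm)
      then show "emeasure ?NS {Zs \<in> space ?NS. (\<theta>, alg2 \<sigma> N \<beta> r mn a b (map (\<lambda>z. s z \<theta>) (map zs L)) Zs) \<in> {x \<in> space (\<Theta> \<Otimes>\<^sub>M borel). s (zs n) (fst x) \<le> snd x}}
          = h (zs, \<theta>)" unfolding h_def by simp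
    qed
    then show ?thesis by (simp add: measure_def)
  qed
  have "(\<lambda>zs. enn2real (\<integral>\<^sup>+\<theta>. h (zs, \<theta>) \<partial>Mtr (map zs L))) \<in> borel_measurable ?\<Omega>"
    by (rule borel_measurable_enn2real[OF nn_integral_measurable_subprob_algebra2[OF hm' ker]])
  then show ?thesis by (subst measurable_cong[OF eq]) 
qed



definition Gs :: "'th measure \<Rightarrow> ('z \<Rightarrow> 'th \<Rightarrow> real) \<Rightarrow> nat \<Rightarrow> nat \<Rightarrow> nat \<Rightarrow> (nat \<Rightarrow> 'z) \<Rightarrow> 'th set" where
  "Gs \<Theta> s n r j zs = {\<theta> \<in> space \<Theta>. length (filter (\<lambda>x. x < s (zs j) \<theta>) (map (\<lambda>i. s (zs i) \<theta>) [0..<Suc n])) < r}"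

lemma Gs_sets:
  fixes s :: "'z \<Rightarrow> 'th \<Rightarrow> real"
  assumes sm: "(\<lambda>(z, \<theta>). s z \<theta>) \<in> borel_measurable (P \<Otimes>\<^sub>M \<Theta>)"
    and zs: "zs \<in> space (PiM {..<Suc n} (\<lambda>_. P))" and j: "j < Suc n"
  shows "Gs \<Theta> s n r j zs \<in> sets \<Theta>"
proof -
  let ?fs = "map (\<lambda>i \<theta>. s (zs i) \<theta>) [0..<Suc n]"
  have fs: "\<forall>g\<in>set ?fs. g \<in> borel_measurable \<Theta>"
    using score_slice[OF sm zs_in_P[OF zs]] by auto
  have h: "(\<lambda>\<theta>. s (zs j) \<theta>) \<in> borel_measurable \<Theta>" by (rule score_slice[OF sm zs_in_P[OF zs j]])
  have c: "(\<lambda>\<theta>. real (length (filter (\<lambda>y. y < s (zs j) \<theta>) (map (\<lambda>g. g \<theta>) ?fs)))) \<in> borel_measurable \<Theta>"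
    by (rule count_lt_meas[OF fs h])
  have "{\<theta> \<in> space \<Theta>. real (length (filter (\<lambda>y. y < s (zs j) \<theta>) (map (\<lambda>g. g \<theta>) ?fs))) < real r} \<in> sets \<Theta>"
    by (rule borel_measurable_less[OF c measurable_const]) simp
  moreover have "{\<theta> \<in> space \<Theta>. real (length (filter (\<lambda>y. y < s (zs j) \<theta>) (map (\<lambda>g. g \<theta>) ?fs))) < real r} = Gs \<Theta> s n r j zs"
    by (simp only: Gs_def map_map comp_def of_nat_less_iff)
  ultimately show ?thesis by simp
qed

lemma part_i_pointwise:
  fixes s :: "'z \<Rightarrow> 'th \<Rightarrow> real" and r :: nat
  assumes sig: "\<sigma> > 0" and N: "N \<ge> 1" and beta: "0 < \<beta>" "\<beta> < 1"
    and sm: "(\<lambda>(z, \<theta>). s z \<theta>) \<in> borel_measurable (P \<Otimes>\<^sub>M \<Theta>)"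
    and tp: "\<And>D. prob_space (Mtr D)" and ts: "\<And>D. sets (Mtr D) = sets \<Theta>"
    and mn: "mn \<ge> 0" and buf: "real r + mn \<le> real n + 1"
    and upper: "\<forall>z\<in>space P. \<forall>\<theta>\<in>space \<Theta>. s z \<theta> < b"
    and zs: "zs \<in> space (PiM {..<Suc n} (\<lambda>_. P))"
  shows "(1 - \<beta>) * measure (Mtr (map zs [0..<Suc n])) (Gs \<Theta> s n r n zs)
     \<le> measure (dpscp Mtr \<Theta> s \<sigma> N \<beta> r mn a b (map zs [0..<Suc n])) {x \<in> space (\<Theta> \<Otimes>\<^sub>M borel). s (zs n) (fst x) \<le> snd x}"
proof -
  let ?D = "map zs [0..<Suc n]"
  let ?A = "{x \<in> space (\<Theta> \<Otimes>\<^sub>M borel). s (zs n) (fst x) \<le> snd x}"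
  let ?NS = "noise_space \<sigma> N"
  let ?E = "{Zs \<in> space ?NS. \<forall>k<N. Zs k < \<sigma> * Phi_inv (1 - \<beta> / real N)}"
  let ?G = "Gs \<Theta> s n r n zs"
  interpret NS: prob_space ?NS by (rule noise_prob_space[OF sig])
  have D: "set ?D \<subseteq> space P" using zs_in_P[OF zs] by auto
  have zn: "zs n \<in> space P" by (rule zs_in_P[OF zs]) simp
  have As: "?A \<in> sets (\<Theta> \<Otimes>\<^sub>M borel)" by (rule A_sets[OF sm zn])
  have Gs: "?G \<in> sets (Mtr ?D)" using Gs_sets[OF sm zs, of n] ts by simp
  have rle: "r \<le> Suc n" using buf mn by linarith
  have Es: "?E \<in> sets ?NS" unfolding noise_space_def by measurable
  have Ep: "ennreal (1 - \<beta>) \<le> emeasure ?NS ?E"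
    using noise_prob[OF sig N beta] NS.emeasure_eq_measure beta by (simp add: ennreal_leI)
  note F = dpscp_facts[OF sig sm D tp ts, where N=N and \<beta>=\<beta> and r=r and mn=mn and a=a and b=b]
  interpret DP: prob_space "dpscp Mtr \<Theta> s \<sigma> N \<beta> r mn a b ?D" by (rule F(1))
  interpret MD: prob_space "Mtr ?D" by (rule tp)
  have "ennreal (1 - \<beta>) * emeasure (Mtr ?D) ?G = (\<integral>\<^sup>+\<theta>. ennreal (1 - \<beta>) * indicator ?G \<theta> \<partial>Mtr ?D)"
    by (rule nn_integral_cmult_indicator[OF Gs, symmetric])
  also have "\<dots> \<le> (\<integral>\<^sup>+\<theta>. emeasure ?NS {Zs \<in> space ?NS. (\<theta>, alg2 \<sigma> N \<beta> r mn a b (map (\<lambda>z. s z \<theta>) ?D) Zs) \<in> ?A} \<partial>Mtr ?D)"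
  proof (rule nn_integral_mono)
    fix \<theta> assume th: "\<theta> \<in> space (Mtr ?D)"
    have th': "\<theta> \<in> space \<Theta>" using th sets_eq_imp_space_eq[OF ts] by simp
    show "ennreal (1 - \<beta>) * indicator ?G \<theta> \<le> emeasure ?NS {Zs \<in> space ?NS. (\<theta>, alg2 \<sigma> N \<beta> r mn a b (map (\<lambda>z. s z \<theta>) ?D) Zs) \<in> ?A}"
    proof (cases "\<theta> \<in> ?G")
      case False then show ?thesis by simp
    next
      case True
      have sub: "?E \<subseteq> {Zs \<in> space ?NS. (\<theta>, alg2 \<sigma> N \<beta> r mn a b (map (\<lambda>z. s z \<theta>) ?D) Zs) \<in> ?A}"
      proof
        fix Zs assume Z: "Zs \<in> ?E"
        let ?S = "map (\<lambda>z. s z \<theta>) ?D"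
        have up: "\<forall>x\<in>set ?S. x < b" using upper D th' by auto
        have cnt: "r \<le> length (filter (\<lambda>x. x \<le> alg2 \<sigma> N \<beta> r mn a b ?S Zs) ?S)"
          by (rule alg2_count[OF up _ mn]) (use rle Z in auto)
        have lt: "length (filter (\<lambda>x. x < s (zs n) \<theta>) ?S) < r"
          using True by (simp only: Gs_def map_map comp_def mem_Collect_eq)
        have "s (zs n) \<theta> \<le> alg2 \<sigma> N \<beta> r mn a b ?S Zs" by (rule cover_of_count[OF lt cnt])
        then show "Zs \<in> {Zs \<in> space ?NS. (\<theta>, alg2 \<sigma> N \<beta> r mn a b (map (\<lambda>z. s z \<theta>) ?D) Zs) \<in> ?A}"
          using Z th' by (auto simp: space_pair_measure)
      qed
      have ms: "{Zs \<in> space ?NS. (\<theta>, alg2 \<sigma> N \<beta> r mn a b (map (\<lambda>z. s z \<theta>) ?D) Zs) \<in> ?A} \<in> sets ?NS"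
        using measurable_sets[OF K_fun_meas[OF sm D th', where \<sigma>=\<sigma> and N=N and \<beta>=\<beta> and r=r and mn=mn and a=a and b=b] As]
        by (simp add: vimage_def Int_def conj_commute)
      have "ennreal (1 - \<beta>) \<le> emeasure ?NS {Zs \<in> space ?NS. (\<theta>, alg2 \<sigma> N \<beta> r mn a b (map (\<lambda>z. s z \<theta>) ?D) Zs) \<in> ?A}"
        using Ep emeasure_mono[OF sub ms] by (rule order.trans)
      then show ?thesis using True by simp
    qed
  qed
  also have "\<dots> = emeasure (dpscp Mtr \<Theta> s \<sigma> N \<beta> r mn a b ?D) ?A" by (rule F(3)[OF As, symmetric])
  finally have le: "ennreal (1 - \<beta>) * emeasure (Mtr ?D) ?G \<le> emeasure (dpscp Mtr \<Theta> s \<sigma> N \<beta> r mn a b ?D) ?A" .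
  have b0: "0 \<le> 1 - \<beta>" using beta by simp
  have "ennreal ((1 - \<beta>) * measure (Mtr ?D) ?G) \<le> ennreal (measure (dpscp Mtr \<Theta> s \<sigma> N \<beta> r mn a b ?D) ?A)"
    using le unfolding MD.emeasure_eq_measure DP.emeasure_eq_measure ennreal_mult[OF b0 measure_nonneg] .
  then show ?thesis by (rule ennreal_le_iff[THEN iffD1, OF measure_nonneg])
qed



lemma g_meas:
  fixes s :: "'z \<Rightarrow> 'th \<Rightarrow> real"
  assumes sm: "(\<lambda>(z, \<theta>). s z \<theta>) \<in> borel_measurable (P \<Otimes>\<^sub>M \<Theta>)"
    and j: "j < Suc n"
    and ker: "(\<lambda>zs. Mtr (map zs [0..<Suc n])) \<in> measurable (PiM {..<Suc n} (\<lambda>_. P)) (subprob_algebra \<Theta>)"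
  shows "(\<lambda>zs. measure (Mtr (map zs [0..<Suc n])) (Gs \<Theta> s n r j zs)) \<in> borel_measurable (PiM {..<Suc n} (\<lambda>_. P))"
proof -
  let ?\<Omega> = "PiM {..<Suc n} (\<lambda>_. P)"
  let ?W = "?\<Omega> \<Otimes>\<^sub>M \<Theta>"
  define Fs where "Fs = map (\<lambda>i w. s (fst w i) (snd w)) [0..<Suc n]"
  have Fs: "\<forall>g\<in>set Fs. g \<in> borel_measurable ?W"
  proof
    fix g assume "g \<in> set Fs"
    then obtain i where i: "i < Suc n" "g = (\<lambda>w. s (fst w i) (snd w))" unfolding Fs_def by (auto simp del: upt_Suc)
    have "i \<in> {..<Suc n}" using i by auto
    then show "g \<in> borel_measurable ?W" unfolding i(2) by (rule score_comp[OF sm])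
  qed
  have h: "(\<lambda>w. s (fst w j) (snd w)) \<in> borel_measurable ?W" by (rule score_comp[OF sm]) (use j in simp)
  have c: "(\<lambda>w. real (length (filter (\<lambda>y. y < s (fst w j) (snd w)) (map (\<lambda>g. g w) Fs)))) \<in> borel_measurable ?W"
    by (rule count_lt_meas[OF Fs h])
  have S1: "{w \<in> space ?W. real (length (filter (\<lambda>y. y < s (fst w j) (snd w)) (map (\<lambda>g. g w) Fs))) < real r} \<in> sets ?W"
    by (rule borel_measurable_less[OF c measurable_const]) simp
  have "{w \<in> space ?W. real (length (filter (\<lambda>y. y < s (fst w j) (snd w)) (map (\<lambda>g. g w) Fs))) < real r}
      = (SIGMA x:space ?\<Omega>. Gs \<Theta> s n r j x)"
    unfolding Fs_def Gs_def by (auto simp del: upt_Suc simp: space_pair_measure comp_def)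
  with S1 have S: "(SIGMA x:space ?\<Omega>. Gs \<Theta> s n r j x) \<in> sets ?W" by simp
  show ?thesis by (rule measure_measurable_subprob_algebra2[OF S ker])
qed

lemma exch:
  fixes s :: "'z \<Rightarrow> 'th \<Rightarrow> real"
  assumes Pp: "prob_space P"
    and perm_inv: "\<And>D D'. mset D = mset D' \<Longrightarrow> Mtr D = Mtr D'"
    and sm: "(\<lambda>(z, \<theta>). s z \<theta>) \<in> borel_measurable (P \<Otimes>\<^sub>M \<Theta>)"
    and ker: "(\<lambda>zs. Mtr (map zs [0..<Suc n])) \<in> measurable (PiM {..<Suc n} (\<lambda>_. P)) (subprob_algebra \<Theta>)"
    and j: "j < Suc n"
  shows "(\<integral>zs. measure (Mtr (map zs [0..<Suc n])) (Gs \<Theta> s n r n zs) \<partial>PiM {..<Suc n} (\<lambda>_. P))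
       = (\<integral>zs. measure (Mtr (map zs [0..<Suc n])) (Gs \<Theta> s n r j zs) \<partial>PiM {..<Suc n} (\<lambda>_. P))"
proof -
  let ?I = "{..<Suc n}"
  let ?\<Omega> = "PiM ?I (\<lambda>_. P)"
  define \<pi> where "\<pi> i = (if i = j then n else if i = n then j else i)" for i
  have pp: "\<pi> (\<pi> i) = i" for i unfolding \<pi>_def by auto
  have pI: "\<pi> i \<in> ?I" if "i \<in> ?I" for i using that j unfolding \<pi>_def by auto
  have bij: "bij_betw \<pi> ?I ?I"
    by (rule bij_betw_byWitness[where f'=\<pi>]) (use pp pI in auto)
  define T where "T zs = (\<lambda>i\<in>?I. zs (\<pi> i))" for zs :: "nat \<Rightarrow> 'z"
  have Tm: "T \<in> measurable ?\<Omega> ?\<Omega>" unfolding T_def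
    by (rule measurable_restrict) (rule measurable_component_singleton[OF pI])
  have dT: "distr ?\<Omega> ?\<Omega> T = ?\<Omega>"
    using distr_PiM_reindex[of ?I "\<lambda>_. P" \<pi> ?I] Pp bij pI unfolding T_def bij_betw_def by auto
  let ?g = "\<lambda>j zs. measure (Mtr (map zs [0..<Suc n])) (Gs \<Theta> s n r j zs)"
  have gm: "?g n \<in> borel_measurable ?\<Omega>" by (rule g_meas[OF sm _ ker]) simp
  have "(\<integral>zs. ?g n zs \<partial>?\<Omega>) = (\<integral>zs. ?g n zs \<partial>distr ?\<Omega> ?\<Omega> T)" using dT by simp
  also have "\<dots> = (\<integral>zs. ?g n (T zs) \<partial>?\<Omega>)" by (rule integral_distr[OF Tm gm])
  also have "\<dots> = (\<integral>zs. ?g j zs \<partial>?\<Omega>)"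
  proof (rule Bochner_Integration.integral_cong[OF refl])
    fix zs assume zs: "zs \<in> space ?\<Omega>"
    have mT: "map (T zs) [0..<Suc n] = map (\<lambda>i. zs (\<pi> i)) [0..<Suc n]"
      unfolding T_def by (rule map_cong) auto
    have ms: "mset (map (\<lambda>i. zs (\<pi> i)) [0..<Suc n]) = mset (map zs [0..<Suc n])"
      by (rule mset_perm_map[OF bij])
    have M: "Mtr (map (T zs) [0..<Suc n]) = Mtr (map zs [0..<Suc n])"
      unfolding mT by (rule perm_inv[OF ms])
    have Tn: "T zs n = zs j" unfolding T_def \<pi>_def by simp
    have G: "Gs \<Theta> s n r n (T zs) = Gs \<Theta> s n r j zs"
    proof -
      have "length (filter (\<lambda>x. x < s (zs j) \<theta>) (map (\<lambda>i. s (T zs i) \<theta>) [0..<Suc n]))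
          = length (filter (\<lambda>x. x < s (zs j) \<theta>) (map (\<lambda>i. s (zs i) \<theta>) [0..<Suc n]))" for \<theta>
      proof (rule length_filter_mset)
        have "map (\<lambda>i. s (T zs i) \<theta>) [0..<Suc n] = map (\<lambda>i. s (zs (\<pi> i)) \<theta>) [0..<Suc n]"
          unfolding T_def by (rule map_cong) auto
        also have "mset \<dots> = mset (map (\<lambda>i. s (zs i) \<theta>) [0..<Suc n])"
          by (rule mset_perm_map[OF bij, of "\<lambda>i. s (zs i) \<theta>"])
        finally show "mset (map (\<lambda>i. s (T zs i) \<theta>) [0..<Suc n]) = mset (map (\<lambda>i. s (zs i) \<theta>) [0..<Suc n])" .
      qed
      then show ?thesis unfolding Gs_def Tn by simp
    qed
    show "?g n (T zs) = ?g j zs" unfolding M G ..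
  qed
  finally show ?thesis .
qed



lemma gsum:
  fixes s :: "'z \<Rightarrow> 'th \<Rightarrow> real" and r :: nat
  assumes sm: "(\<lambda>(z, \<theta>). s z \<theta>) \<in> borel_measurable (P \<Otimes>\<^sub>M \<Theta>)"
    and tp: "\<And>D. prob_space (Mtr D)" and ts: "\<And>D. sets (Mtr D) = sets \<Theta>"
    and rle: "r \<le> Suc n"
    and zs: "zs \<in> space (PiM {..<Suc n} (\<lambda>_. P))"
  shows "real r \<le> (\<Sum>j<Suc n. measure (Mtr (map zs [0..<Suc n])) (Gs \<Theta> s n r j zs))"
proof -
  let ?M = "Mtr (map zs [0..<Suc n])"
  interpret M: prob_space ?M by (rule tp)
  have sp: "space ?M = space \<Theta>" by (rule sets_eq_imp_space_eq[OF ts])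
  have Gs: "Gs \<Theta> s n r j zs \<in> sets ?M" if "j < Suc n" for j
    using Gs_sets[OF sm zs that] ts by simp
  have Gsub: "Gs \<Theta> s n r j zs \<subseteq> space ?M" for j unfolding sp Gs_def by auto
  have int: "integrable ?M (indicator (Gs \<Theta> s n r j zs) :: _ \<Rightarrow> real)" if "j < Suc n" for j
    by (rule integrable_real_indicator[OF Gs[OF that]]) (simp del: upt_Suc add: M.emeasure_eq_measure)
  have "(\<Sum>j<Suc n. measure ?M (Gs \<Theta> s n r j zs)) = (\<Sum>j<Suc n. \<integral>\<theta>. indicator (Gs \<Theta> s n r j zs) \<theta> \<partial>?M)"
    using Gsub by (intro sum.cong refl) (simp add: Int_absorb2)
  also have "\<dots> = (\<integral>\<theta>. (\<Sum>j<Suc n. indicator (Gs \<Theta> s n r j zs) \<theta>) \<partial>?M)"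
    by (rule Bochner_Integration.integral_sum[symmetric]) (use int in auto)
  finally have eq: "(\<Sum>j<Suc n. measure ?M (Gs \<Theta> s n r j zs)) = (\<integral>\<theta>. (\<Sum>j<Suc n. indicator (Gs \<Theta> s n r j zs) \<theta>) \<partial>?M)" .
  have pt: "real r \<le> (\<Sum>j<Suc n. indicator (Gs \<Theta> s n r j zs) \<theta>)" if th: "\<theta> \<in> space ?M" for \<theta>
  proof -
    let ?S = "map (\<lambda>i. s (zs i) \<theta>) [0..<Suc n]"
    have th': "\<theta> \<in> space \<Theta>" using th sp by simp
    have ind: "(indicator (Gs \<Theta> s n r j zs) \<theta> :: real) = of_bool (\<theta> \<in> Gs \<Theta> s n r j zs)" for j
      by (simp add: indicator_def)
    have "(\<Sum>j<Suc n. indicator (Gs \<Theta> s n r j zs) \<theta> :: real) = real (card ({..<Suc n} \<inter> {j. \<theta> \<in> Gs \<Theta> s n r j zs}))"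
      unfolding ind using sum_of_bool_eq[of "{..<Suc n}" "\<lambda>j. \<theta> \<in> Gs \<Theta> s n r j zs"]
      by simp
    moreover have "{..<Suc n} \<inter> {j. \<theta> \<in> Gs \<Theta> s n r j zs} = {i. i < length ?S \<and> length (filter (\<lambda>x. x < ?S!i) ?S) < r}"
      using th' unfolding Gs_def by (auto simp del: upt_Suc)
    moreover have "r \<le> card {i. i < length ?S \<and> length (filter (\<lambda>x. x < ?S!i) ?S) < r}"
      by (rule many_small) (use rle in simp)
    ultimately show ?thesis by simp
  qed
  have "real r \<le> (\<integral>\<theta>. (\<Sum>j<Suc n. indicator (Gs \<Theta> s n r j zs) \<theta>) \<partial>?M)"
  proof (rule M.integral_ge_const)
    show "integrable ?M (\<lambda>\<theta>. \<Sum>j<Suc n. indicator (Gs \<Theta> s n r j zs) \<theta> :: real)"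
      by (rule Bochner_Integration.integrable_sum) (rule int, simp only: lessThan_iff)
    show "AE \<theta> in ?M. real r \<le> (\<Sum>j<Suc n. indicator (Gs \<Theta> s n r j zs) \<theta>)"
      by (rule AE_I2) (rule pt)
  qed
  then show ?thesis using eq by simp
qed



lemma part_i:
  fixes s :: "'z \<Rightarrow> 'th \<Rightarrow> real" and r :: nat
  assumes sig: "\<sigma> > 0" and N: "N \<ge> 1" and beta: "0 < \<beta>" "\<beta> < 1"
    and Pp: "prob_space P"
    and sm: "(\<lambda>(z, \<theta>). s z \<theta>) \<in> borel_measurable (P \<Otimes>\<^sub>M \<Theta>)"
    and tp: "\<And>D. prob_space (Mtr D)" and ts: "\<And>D. sets (Mtr D) = sets \<Theta>"
    and perm_inv: "\<And>D D'. mset D = mset D' \<Longrightarrow> Mtr D = Mtr D'"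
    and mn: "mn \<ge> 0" and buf: "real r + mn \<le> real n + 1"
    and upper: "\<forall>z\<in>space P. \<forall>\<theta>\<in>space \<Theta>. s z \<theta> < b"
    and ker: "(\<lambda>zs. Mtr (map zs [0..<Suc n])) \<in> measurable (PiM {..<Suc n} (\<lambda>_. P)) (subprob_algebra \<Theta>)"
    and rge: "(1 - \<alpha>) * (real n + 1) \<le> real r"
  shows "(1 - \<alpha>) * (1 - \<beta>) \<le> (\<integral>zs. measure (dpscp Mtr \<Theta> s \<sigma> N \<beta> r mn a b (map zs [0..<Suc n]))
                {x \<in> space (\<Theta> \<Otimes>\<^sub>M borel). s (zs n) (fst x) \<le> snd x} \<partial>PiM {..<Suc n} (\<lambda>_. P))"
proof -
  let ?\<Omega> = "PiM {..<Suc n} (\<lambda>_. P)"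
  let ?g = "\<lambda>j zs. measure (Mtr (map zs [0..<Suc n])) (Gs \<Theta> s n r j zs)"
  let ?mu = "\<lambda>zs. measure (dpscp Mtr \<Theta> s \<sigma> N \<beta> r mn a b (map zs [0..<Suc n])) {x \<in> space (\<Theta> \<Otimes>\<^sub>M borel). s (zs n) (fst x) \<le> snd x}"
  interpret O: prob_space ?\<Omega> using Pp by (intro prob_space_PiM) auto
  have rle: "r \<le> Suc n" using buf mn by linarith
  have gm: "?g j \<in> borel_measurable ?\<Omega>" if "j < Suc n" for j by (rule g_meas[OF sm that ker])
  have gint: "integrable ?\<Omega> (?g j)" if "j < Suc n" for j
  proof (rule O.integrable_const_bound[where B=1])
    show "AE zs in ?\<Omega>. norm (?g j zs) \<le> 1"
    proof (rule AE_I2)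
      fix zs
      interpret M: prob_space "Mtr (map zs [0..<Suc n])" by (rule tp)
      show "norm (?g j zs) \<le> 1" by (simp del: upt_Suc)
    qed
    show "?g j \<in> borel_measurable ?\<Omega>" by (rule gm[OF that])
  qed
  have mum: "?mu \<in> borel_measurable ?\<Omega>"
    by (rule mu_meas[OF sig sm tp ts _ ker]) auto
  have muint: "integrable ?\<Omega> ?mu"
  proof (rule O.integrable_const_bound[where B=1])
    show "AE zs in ?\<Omega>. norm (?mu zs) \<le> 1"
    proof (rule AE_I2)
      fix zs assume zs: "zs \<in> space ?\<Omega>"
      have D: "set (map zs [0..<Suc n]) \<subseteq> space P" using zs_in_P[OF zs] by auto
      interpret M: prob_space "dpscp Mtr \<Theta> s \<sigma> N \<beta> r mn a b (map zs [0..<Suc n])"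
        by (rule dpscp_facts(1)[OF sig sm D tp ts])
      show "norm (?mu zs) \<le> 1" by (simp del: upt_Suc)
    qed
    show "?mu \<in> borel_measurable ?\<Omega>" by (rule mum)
  qed
  have eqj: "(\<integral>zs. ?g j zs \<partial>?\<Omega>) = (\<integral>zs. ?g n zs \<partial>?\<Omega>)" if "j < Suc n" for j
    by (rule exch[OF Pp perm_inv sm ker that, symmetric])
  have "real r \<le> (\<integral>zs. (\<Sum>j<Suc n. ?g j zs) \<partial>?\<Omega>)"
  proof (rule O.integral_ge_const)
    show "integrable ?\<Omega> (\<lambda>zs. \<Sum>j<Suc n. ?g j zs)"
      by (rule Bochner_Integration.integrable_sum) (use gint in blast)
    show "AE zs in ?\<Omega>. real r \<le> (\<Sum>j<Suc n. ?g j zs)"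
      by (rule AE_I2) (rule gsum[OF sm tp ts rle])
  qed
  also have "(\<integral>zs. (\<Sum>j<Suc n. ?g j zs) \<partial>?\<Omega>) = (\<Sum>j<Suc n. (\<integral>zs. ?g j zs \<partial>?\<Omega>))"
    by (rule Bochner_Integration.integral_sum) (use gint in blast)
  also have "\<dots> = (\<Sum>j<Suc n. (\<integral>zs. ?g n zs \<partial>?\<Omega>))"
    by (rule sum.cong[OF refl]) (use eqj in blast)
  also have "\<dots> = (real n + 1) * (\<integral>zs. ?g n zs \<partial>?\<Omega>)" by simp
  finally have "(1 - \<alpha>) * (real n + 1) \<le> (real n + 1) * (\<integral>zs. ?g n zs \<partial>?\<Omega>)" using rge by linarith
  then have g1: "1 - \<alpha> \<le> (\<integral>zs. ?g n zs \<partial>?\<Omega>)"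
    by (smt (verit, ccfv_SIG) mult.commute mult_le_cancel_left_pos of_nat_0_le_iff)
  have "(1 - \<beta>) * (\<integral>zs. ?g n zs \<partial>?\<Omega>) = (\<integral>zs. (1 - \<beta>) * ?g n zs \<partial>?\<Omega>)" by simp
  also have "\<dots> \<le> (\<integral>zs. ?mu zs \<partial>?\<Omega>)"
  proof (rule integral_mono)
    show "integrable ?\<Omega> (\<lambda>zs. (1 - \<beta>) * ?g n zs)" using gint[of n] by simp
    show "integrable ?\<Omega> ?mu" by (rule muint)
    fix zs assume zs: "zs \<in> space ?\<Omega>"
    show "(1 - \<beta>) * ?g n zs \<le> ?mu zs"
      by (rule part_i_pointwise[OF sig N beta sm tp ts mn buf upper zs])
  qed
  finally have "(1 - \<beta>) * (\<integral>zs. ?g n zs \<partial>?\<Omega>) \<le> (\<integral>zs. ?mu zs \<partial>?\<Omega>)" .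
  moreover have "(1 - \<alpha>) * (1 - \<beta>) \<le> (1 - \<beta>) * (\<integral>zs. ?g n zs \<partial>?\<Omega>)"
    using g1 beta by (simp add: mult.commute mult_left_mono)
  ultimately show ?thesis by linarith
qed



lemma tradeoff_le:
  assumes Pp: "prob_space Pm" and Qp: "prob_space Qm" and ss: "sets Pm = sets Qm" and A: "A \<in> sets Pm"
  shows "tradeoff Pm Qm (measure Pm A) \<le> 1 - measure Qm A"
proof -
  interpret Pm: prob_space Pm by (rule Pp)
  interpret Qm: prob_space Qm by (rule Qp)
  have sp: "space Pm = space Qm" by (rule sets_eq_imp_space_eq[OF ss])
  let ?S = "{1 - (\<integral>x. \<phi> x \<partial>Qm) | \<phi>. \<phi> \<in> borel_measurable Pm \<and> (\<forall>x\<in>space Pm. 0 \<le> \<phi> x \<and> \<phi> x \<le> 1)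
       \<and> (\<integral>x. \<phi> x \<partial>Pm) \<le> measure Pm A}"
  have AQ: "A \<in> sets Qm" using A ss by simp
  have Asub: "A \<subseteq> space Pm" by (rule sets.sets_into_space[OF A])
  have mem: "1 - measure Qm A \<in> ?S"
  proof -
    have "indicator A \<in> borel_measurable Pm" using A by simp
    moreover have "\<forall>x\<in>space Pm. 0 \<le> (indicator A x :: real) \<and> (indicator A x :: real) \<le> 1"
      by (simp add: indicator_def)
    moreover have "(\<integral>x. indicator A x \<partial>Pm) = measure Pm A" using Asub by (simp add: Int_absorb2)
    moreover have "(\<integral>x. indicator A x \<partial>Qm) = measure Qm A" using Asub sp by (simp add: Int_absorb2)
    ultimately show ?thesis by (intro CollectI exI[where x="indicator A"]) auto
  qed
  have bdd: "bdd_below ?S"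
  proof (rule bdd_belowI[where m=0])
    fix v assume "v \<in> ?S"
    then obtain \<phi> where v: "v = 1 - (\<integral>x. \<phi> x \<partial>Qm)" and ph: "\<forall>x\<in>space Pm. 0 \<le> \<phi> x \<and> \<phi> x \<le> 1" by auto
    have "(\<integral>x. \<phi> x \<partial>Qm) \<le> 1"
    proof (cases "integrable Qm \<phi>")
      case True
      show ?thesis by (rule Qm.integral_le_const[OF True]) (rule AE_I2, use ph sp in auto)
    next
      case False then show ?thesis by (simp add: not_integrable_integral_eq)
    qed
    then show "0 \<le> v" using v by simp
  qed
  show ?thesis unfolding tradeoff_def by (rule cInf_lower[OF mem bdd])
qed

lemma part_ii_pointwise:
  fixes s :: "'z \<Rightarrow> 'th \<Rightarrow> real" and r :: nat
  assumes sig: "\<sigma> > 0"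
    and sm: "(\<lambda>(z, \<theta>). s z \<theta>) \<in> borel_measurable (P \<Otimes>\<^sub>M \<Theta>)"
    and tp: "\<And>D. prob_space (Mtr D)" and ts: "\<And>D. sets (Mtr D) = sets \<Theta>"
    and fdp: "f_DP (dpscp Mtr \<Theta> s \<sigma> N \<beta> r mn a b) f"
    and zs: "zs \<in> space (PiM {..<Suc n} (\<lambda>_. P))"
  shows "f (1 - measure (dpscp Mtr \<Theta> s \<sigma> N \<beta> r mn a b (map zs [0..<Suc n])) {x \<in> space (\<Theta> \<Otimes>\<^sub>M borel). s (zs n) (fst x) \<le> snd x})
     \<le> measure (dpscp Mtr \<Theta> s \<sigma> N \<beta> r mn a b (map zs [0..<n])) {x \<in> space (\<Theta> \<Otimes>\<^sub>M borel). s (zs n) (fst x) \<le> snd x}"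
proof -
  let ?D1 = "map zs [0..<Suc n]"
  let ?D0 = "map zs [0..<n]"
  let ?M = "dpscp Mtr \<Theta> s \<sigma> N \<beta> r mn a b"
  let ?A = "{x \<in> space (\<Theta> \<Otimes>\<^sub>M borel). s (zs n) (fst x) \<le> snd x}"
  have D1: "set ?D1 \<subseteq> space P" using zs_in_P[OF zs] by auto
  have D0: "set ?D0 \<subseteq> space P" using zs_in_P[OF zs] by auto
  have zn: "zs n \<in> space P" by (rule zs_in_P[OF zs]) simp
  note F1 = dpscp_facts[OF sig sm D1 tp ts, where N=N and \<beta>=\<beta> and r=r and mn=mn and a=a and b=b]
  note F0 = dpscp_facts[OF sig sm D0 tp ts, where N=N and \<beta>=\<beta> and r=r and mn=mn and a=a and b=b]
  interpret M1: prob_space "?M ?D1" by (rule F1(1))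
  interpret M0: prob_space "?M ?D0" by (rule F0(1))
  have As: "?A \<in> sets (\<Theta> \<Otimes>\<^sub>M borel)" by (rule A_sets[OF sm zn])
  let ?C = "space (\<Theta> \<Otimes>\<^sub>M borel) - ?A"
  have Cs: "?C \<in> sets (\<Theta> \<Otimes>\<^sub>M borel)" using As by auto
  have sp1: "space (?M ?D1) = space (\<Theta> \<Otimes>\<^sub>M borel)" by (rule sets_eq_imp_space_eq[OF F1(2)])
  have sp0: "space (?M ?D0) = space (\<Theta> \<Otimes>\<^sub>M borel)" by (rule sets_eq_imp_space_eq[OF F0(2)])
  have c1: "measure (?M ?D1) ?C = 1 - measure (?M ?D1) ?A"
    using M1.prob_compl[of ?A] As F1(2) sp1 by simp
  have c0: "measure (?M ?D0) ?C = 1 - measure (?M ?D0) ?A"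
    using M0.prob_compl[of ?A] As F0(2) sp0 by simp
  have adj: "adjacent ?D1 ?D0" unfolding adjacent_def
    by (rule exI[where x="?D0"], rule exI[where x="[]"], rule exI[where x="zs n"]) simp
  have a01: "1 - measure (?M ?D1) ?A \<in> {0..1}" by (simp del: upt_Suc)
  have "f (1 - measure (?M ?D1) ?A) \<le> tradeoff (?M ?D1) (?M ?D0) (1 - measure (?M ?D1) ?A)"
    using fdp adj a01 unfolding f_DP_def by blast
  also have "\<dots> = tradeoff (?M ?D1) (?M ?D0) (measure (?M ?D1) ?C)" using c1 by simp
  also have "\<dots> \<le> 1 - measure (?M ?D0) ?C"
    by (rule tradeoff_le[OF F1(1) F0(1)]) (use F1(2) F0(2) Cs in simp_all)
  also have "\<dots> = measure (?M ?D0) ?A" using c0 by simp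
  finally show ?thesis .
qed



lemma mu_integrable:
  fixes L :: "nat list" and s :: "'z \<Rightarrow> 'th \<Rightarrow> real"
  assumes sig: "\<sigma> > 0" and sm: "(\<lambda>(z, \<theta>). s z \<theta>) \<in> borel_measurable (P \<Otimes>\<^sub>M \<Theta>)"
    and Pp: "prob_space P"
    and tp: "\<And>D. prob_space (Mtr D)" and ts: "\<And>D. sets (Mtr D) = sets \<Theta>"
    and L: "set L \<subseteq> {..<Suc n}"
    and ker: "(\<lambda>zs. Mtr (map zs L)) \<in> measurable (PiM {..<Suc n} (\<lambda>_. P)) (subprob_algebra \<Theta>)"
  shows "integrable (PiM {..<Suc n} (\<lambda>_. P)) (\<lambda>zs. measure (dpscp Mtr \<Theta> s \<sigma> N \<beta> r mn a b (map zs L)) {x \<in> space (\<Theta> \<Otimes>\<^sub>M borel). s (zs n) (fst x) \<le> snd x})"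
proof -
  let ?\<Omega> = "PiM {..<Suc n} (\<lambda>_. P)"
  interpret O: prob_space ?\<Omega> using Pp by (intro prob_space_PiM) auto
  show ?thesis
  proof (rule O.integrable_const_bound[where B=1])
    show "AE zs in ?\<Omega>. norm (measure (dpscp Mtr \<Theta> s \<sigma> N \<beta> r mn a b (map zs L)) {x \<in> space (\<Theta> \<Otimes>\<^sub>M borel). s (zs n) (fst x) \<le> snd x}) \<le> 1"
    proof (rule AE_I2)
      fix zs assume zs: "zs \<in> space ?\<Omega>"
      have D: "set (map zs L) \<subseteq> space P" using zs_in_P[OF zs] L by auto
      interpret M: prob_space "dpscp Mtr \<Theta> s \<sigma> N \<beta> r mn a b (map zs L)"
        by (rule dpscp_facts(1)[OF sig sm D tp ts])
      show "norm (measure (dpscp Mtr \<Theta> s \<sigma> N \<beta> r mn a b (map zs L)) {x \<in> space (\<Theta> \<Otimes>\<^sub>M borel). s (zs n) (fst x) \<le> snd x}) \<le> 1"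
        by (simp del: upt_Suc)
    qed
    show "(\<lambda>zs. measure (dpscp Mtr \<Theta> s \<sigma> N \<beta> r mn a b (map zs L)) {x \<in> space (\<Theta> \<Otimes>\<^sub>M borel). s (zs n) (fst x) \<le> snd x}) \<in> borel_measurable ?\<Omega>"
      by (rule mu_meas[OF sig sm tp ts L ker])
  qed
qed

theorem corollary1:
  fixes P :: "'z measure" and \<Theta> :: "'th measure"
    and Mtr :: "'z list \<Rightarrow> 'th measure" and s :: "'z \<Rightarrow> 'th \<Rightarrow> real"
    and \<alpha> \<beta> \<sigma> mn a b :: real and n N :: nat and f :: "real \<Rightarrow> real"
  assumes alpha: "0 < \<alpha>" "\<alpha> < 1"
    and beta: "0 < \<beta>" "\<beta> < 1"
    and sigma: "\<sigma> > 0" and N: "N \<ge> 1"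
    and data: "prob_space P"
    and mn: "mn \<ge> 0"
    and buffer: "real (nat \<lceil>(1 - \<alpha>) * (real n + 1)\<rceil>) + mn \<le> real n + 1"
    and train_prob: "\<And>D. prob_space (Mtr D)"
    and train_sets: "\<And>D. sets (Mtr D) = sets \<Theta>"
    and perm_inv: "\<And>D D'. mset D = mset D' \<Longrightarrow> Mtr D = Mtr D'"
    and score_meas: "(\<lambda>(z, \<theta>). s z \<theta>) \<in> borel_measurable (P \<Otimes>\<^sub>M \<Theta>)"
    and kernel_n: "(\<lambda>zs. Mtr (map zs [0..<n])) \<in> measurable (PiM {..<Suc n} (\<lambda>_. P)) (subprob_algebra \<Theta>)"
    and kernel_Sn: "(\<lambda>zs. Mtr (map zs [0..<Suc n])) \<in> measurable (PiM {..<Suc n} (\<lambda>_. P)) (subprob_algebra \<Theta>)"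
    and upper: "\<forall>z\<in>space P. \<forall>\<theta>\<in>space \<Theta>. s z \<theta> < b"
  shows
    "(\<integral>zs. measure (dpscp Mtr \<Theta> s \<sigma> N \<beta> (nat \<lceil>(1 - \<alpha>) * (real n + 1)\<rceil>) mn a b (map zs [0..<Suc n]))
                {x \<in> space (\<Theta> \<Otimes>\<^sub>M borel). s (zs n) (fst x) \<le> snd x}
        \<partial>PiM {..<Suc n} (\<lambda>_. P)) \<ge> 1 - (\<alpha> + \<beta> - \<alpha> * \<beta>)
     \<and> ((tradeoff_fun f \<and> f_DP (dpscp Mtr \<Theta> s \<sigma> N \<beta> (nat \<lceil>(1 - \<alpha>) * (real n + 1)\<rceil>) mn a b) f
          \<and> real (nat \<lceil>(1 - \<alpha>) * (real n + 1)\<rceil>) + mn \<le> real n) \<longrightarrow>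
        (\<integral>zs. measure (dpscp Mtr \<Theta> s \<sigma> N \<beta> (nat \<lceil>(1 - \<alpha>) * (real n + 1)\<rceil>) mn a b (map zs [0..<n]))
                {x \<in> space (\<Theta> \<Otimes>\<^sub>M borel). s (zs n) (fst x) \<le> snd x}
        \<partial>PiM {..<Suc n} (\<lambda>_. P)) \<ge> f (\<alpha> + \<beta> - \<alpha> * \<beta>))"
proof -
  define r where "r = nat \<lceil>(1 - \<alpha>) * (real n + 1)\<rceil>"
  let ?\<Omega> = "PiM {..<Suc n} (\<lambda>_. P)"
  let ?A = "\<lambda>zs. {x \<in> space (\<Theta> \<Otimes>\<^sub>M borel). s (zs n) (fst x) \<le> snd x}"
  define mu1 where "mu1 zs = measure (dpscp Mtr \<Theta> s \<sigma> N \<beta> r mn a b (map zs [0..<Suc n])) (?A zs)" for zs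
  define mu0 where "mu0 zs = measure (dpscp Mtr \<Theta> s \<sigma> N \<beta> r mn a b (map zs [0..<n])) (?A zs)" for zs
  define \<alpha>0 where "\<alpha>0 = \<alpha> + \<beta> - \<alpha> * \<beta>"
  interpret O: prob_space ?\<Omega> using data by (intro prob_space_PiM) auto
  have x0: "0 \<le> (1 - \<alpha>) * (real n + 1)" using alpha by simp
  have rge: "(1 - \<alpha>) * (real n + 1) \<le> real r"
  proof -
    have "(1 - \<alpha>) * (real n + 1) \<le> of_int \<lceil>(1 - \<alpha>) * (real n + 1)\<rceil>" by (rule le_of_int_ceiling)
    also have "of_int \<lceil>(1 - \<alpha>) * (real n + 1)\<rceil> = real r"
      unfolding r_def using x0 by (simp add: of_nat_nat)
    finally show ?thesis .
  qed
  have buf: "real r + mn \<le> real n + 1" using buffer unfolding r_def .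
  have I: "(1 - \<alpha>) * (1 - \<beta>) \<le> (\<integral>zs. mu1 zs \<partial>?\<Omega>)"
    unfolding mu1_def
    by (rule part_i[OF sigma N beta data score_meas train_prob train_sets perm_inv mn buf upper kernel_Sn rge])
  have a0eq: "1 - \<alpha>0 = (1 - \<alpha>) * (1 - \<beta>)" unfolding \<alpha>0_def by (simp add: algebra_simps)
  have part1: "(\<integral>zs. mu1 zs \<partial>?\<Omega>) \<ge> 1 - \<alpha>0" using I a0eq by simp
  have part2: "f \<alpha>0 \<le> (\<integral>zs. mu0 zs \<partial>?\<Omega>)"
    if tf: "tradeoff_fun f" and fdp: "f_DP (dpscp Mtr \<Theta> s \<sigma> N \<beta> r mn a b) f"
  proof -
    have cv: "convex_on {0..1} f" and mono: "\<forall>x\<in>{0..1}. \<forall>y\<in>{0..1}. x \<le> y \<longrightarrow> f y \<le> f x"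
      using tf unfolding tradeoff_fun_def by auto
    have pos: "0 < (1 - \<alpha>) * (1 - \<beta>)" using alpha beta by simp
    have a0: "0 < \<alpha>0" "\<alpha>0 < 1"
    proof -
      have "0 < \<alpha> + \<beta> * (1 - \<alpha>)" using alpha beta by (simp add: add_pos_nonneg)
      then show "0 < \<alpha>0" unfolding \<alpha>0_def by (simp add: algebra_simps)
      show "\<alpha>0 < 1" using pos a0eq by linarith
    qed
    obtain c where c0: "c \<le> 0" and cl: "\<forall>x\<in>{0..1}. f \<alpha>0 + c * (x - \<alpha>0) \<le> f x"
      using support_line[OF cv mono a0] by blast
    have int1: "integrable ?\<Omega> mu1" unfolding mu1_def
      by (rule mu_integrable[OF sigma score_meas data train_prob train_sets _ kernel_Sn]) auto
    have int0: "integrable ?\<Omega> mu0" unfolding mu0_def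
      by (rule mu_integrable[OF sigma score_meas data train_prob train_sets _ kernel_n]) auto
    have pt: "(f \<alpha>0 + c * (1 - \<alpha>0)) - c * mu1 zs \<le> mu0 zs" if zs: "zs \<in> space ?\<Omega>" for zs
    proof -
      have D: "set (map zs [0..<Suc n]) \<subseteq> space P" using zs_in_P[OF zs] by auto
      interpret M: prob_space "dpscp Mtr \<Theta> s \<sigma> N \<beta> r mn a b (map zs [0..<Suc n])"
        by (rule dpscp_facts(1)[OF sigma score_meas D train_prob train_sets])
      have m01: "1 - mu1 zs \<in> {0..1}" unfolding mu1_def by (simp del: upt_Suc)
      have "f \<alpha>0 + c * ((1 - mu1 zs) - \<alpha>0) \<le> f (1 - mu1 zs)" using cl m01 by blast
      also have "\<dots> \<le> mu0 zs" unfolding mu1_def mu0_def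
        by (rule part_ii_pointwise[OF sigma score_meas train_prob train_sets fdp zs])
      finally show ?thesis by (simp add: algebra_simps)
    qed
    have "(\<integral>zs. (f \<alpha>0 + c * (1 - \<alpha>0)) - c * mu1 zs \<partial>?\<Omega>) \<le> (\<integral>zs. mu0 zs \<partial>?\<Omega>)"
      by (rule integral_mono[OF _ int0 pt]) (use int1 in simp)
    moreover have "(\<integral>zs. (f \<alpha>0 + c * (1 - \<alpha>0)) - c * mu1 zs \<partial>?\<Omega>) = (f \<alpha>0 + c * (1 - \<alpha>0)) - c * (\<integral>zs. mu1 zs \<partial>?\<Omega>)"
      using int1 by (simp add: O.prob_space)
    moreover have "0 \<le> c * ((1 - \<alpha>0) - (\<integral>zs. mu1 zs \<partial>?\<Omega>))"
      using c0 part1 by (intro mult_nonpos_nonpos) auto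
    ultimately show ?thesis by (simp add: algebra_simps)
  qed
  show ?thesis
    using part1 part2 unfolding mu1_def mu0_def \<alpha>0_def r_def by blast
qed

end
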